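(* Let $k$ be a positive integer. Let $N>0$, $\tau=x+iy$ with $y=\frac{1}{4\sqrt N}$ and $y\le|x|\le\frac12$. Then \[ |F_k(q)|\ll N^{1/2}e^{\frac\pi4\sqrt N}. \]
   Context: $q=e^{2\pi i\tau}$, $(a;q)_\infty=\prod_{j\ge1}(1-aq^{j-1})$, $f_{0,a,b}(\tau)=\sum_{n=1}^\infty(-1)^nq^{(an^2+bn)/2}$, and \[ F_k(q)=\frac{(-q;q)_\infty}{(q;q)_\infty}\Big[2f_{0,2,4k-2}(\tau)-f_{0,1,4k-1}(\tau)-f_{0,1,4k-3}(\tau)\Big]. \] The implied constant is independent of $N$ and $x$. *)

theory Defs
  imports "HOL-Analysis.Analysis"
begin

definition nome :: "complex \<Rightarrow> complex" where
  "nome \<tau> = exp (2 * pi * \<i> * \<tau>)"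

definition qpoch_inf :: "complex \<Rightarrow> complex \<Rightarrow> complex" where
  "qpoch_inf a q = (\<Prod>j. 1 - a * q ^ j)"

text \<open>f_{0,a,b}(tau) = sum_{n>=1} (-1)^n q^((a n^2 + b n)/2), where
  q^r := exp(2 pi i tau r).\<close>
definition f0 :: "int \<Rightarrow> int \<Rightarrow> complex \<Rightarrow> complex" where
  "f0 a b \<tau> = (\<Sum>m. let n = Suc m in
      (-1) ^ n * exp (2 * pi * \<i> * \<tau> * of_real ((of_int a * real n ^ 2 + of_int b * real n) / 2)))"

definition F :: "nat \<Rightarrow> complex \<Rightarrow> complex" where
  "F k \<tau> = qpoch_inf (- nome \<tau>) (nome \<tau>) / qpoch_inf (nome \<tau>) (nome \<tau>) *
     (2 * f0 2 (4 * int k - 2) \<tau> - f0 1 (4 * int k - 1) \<tau> - f0 1 (4 * int k - 3) \<tau>)"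

end

theory Submission
  imports Defs
begin


lemma odd_basel: "(\<lambda>n. (1 - (-1)^n) / (real n)^2) sums (pi^2/4)"
proof -
  have s1: "(\<lambda>n. 1 / (real n)^2) sums (pi^2/6)"
  proof -
    have "(\<lambda>n. 1 / (real (Suc n))^2) sums (pi^2/6)"
      using inverse_squares_sums by (simp add: add.commute)
    then show ?thesis by (subst (asm) sums_Suc_iff) simp
  qed
  have s2: "(\<lambda>n. (1 + (-1)^n) / (real n)^2) sums (pi^2/12)"
  proof -
    have S: "(\<lambda>j. (1 + (-1::real)^(2*j)) / (real (2*j))^2) sums (pi^2/12)"
    proof -
      have "(\<lambda>j. (1/2) * (1 / (real j)^2)) sums ((1/2) * (pi^2/6))"
        by (rule sums_mult[OF s1])
      moreover have "(\<lambda>j. (1/2) * (1 / (real j)^2)) = (\<lambda>j. (1 + (-1)^(2*j)) / (real (2*j))^2)"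
        by (auto simp: field_simps)
      ultimately show ?thesis by simp
    qed
    have M: "strict_mono (\<lambda>j::nat. 2*j)" by (auto simp: strict_mono_def)
    have Z: "\<And>n. n \<notin> range (\<lambda>j::nat. 2*j) \<Longrightarrow> (1 + (-1::real)^n) / (real n)^2 = 0"
    proof -
      fix n :: nat assume "n \<notin> range (\<lambda>j::nat. 2*j)"
      then have "odd n" by (metis evenE rangeI)
      then show "(1 + (-1::real)^n) / (real n)^2 = 0" by simp
    qed
    show ?thesis using iffD1[OF sums_mono_reindex[OF M Z] S] .
  qed
  have "(\<lambda>n. 2 * (1 / (real n)^2) - (1 + (-1)^n) / (real n)^2) sums (2*(pi^2/6) - pi^2/12)"
    by (intro sums_diff sums_mult s1 s2)
  moreover have "2*(pi^2/6) - pi^2/12 = pi^2/4" by simp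
  moreover have "(\<lambda>n. 2 * (1 / (real n)^2) - (1 + (-1)^n) / (real n)^2) = (\<lambda>n. (1 - (-1)^n) / (real n)^2)"
    by (rule ext) (simp add: diff_divide_distrib [symmetric])
  ultimately show ?thesis by simp
qed



lemma fact_ge_6_pow: "6 * 2^n \<le> (fact (n+3) :: real)"
proof (induction n)
  case 0 then show ?case by (simp add: eval_nat_numeral)
next
  case (Suc n)
  have "fact (Suc n + 3) = real (n+4) * fact (n+3)"
    by (simp add: eval_nat_numeral)
  also have "\<dots> \<ge> 2 * (6 * 2^n)"
    using Suc by (intro mult_mono) auto
  finally show ?case by simp
qed

lemma exp_rem3:
  fixes u :: complex assumes "norm u \<le> 1"
  shows "norm (exp u - 1 - u - u^2/2) \<le> norm u ^ 3 / 3"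
proof -
  have e: "exp u = (\<Sum>n<3. inverse(fact n) *\<^sub>R (u ^ n)) + (\<Sum>n. inverse(fact (n + 3)) *\<^sub>R (u ^ (n + 3)))"
    by (rule exp_first_terms)
  have s3: "(\<Sum>n<3. inverse(fact n) *\<^sub>R (u ^ n)) = 1 + u + u^2/2"
    by (simp add: eval_nat_numeral lessThan_Suc scaleR_conv_of_real field_simps)
  have "exp u - 1 - u - u^2/2 = (\<Sum>n. inverse(fact (n + 3)) *\<^sub>R (u ^ (n + 3)))"
    using e s3 by simp
  also have "norm \<dots> \<le> (\<Sum>n. norm (inverse(fact (n + 3)) *\<^sub>R (u ^ (n + 3))))"
  proof (rule summable_norm)
    have "summable (\<lambda>n. inverse (fact n) * norm u ^ n)"
      using summable_exp[of "norm u"] by (simp add: field_simps)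
    then have "summable (\<lambda>n. inverse (fact (n+3)) * norm u ^ (n+3))"
      by (rule summable_ignore_initial_segment)
    then show "summable (\<lambda>n. norm (inverse(fact (n + 3)) *\<^sub>R (u ^ (n + 3))))"
      by (simp add: norm_power)
  qed
  also have "\<dots> \<le> (\<Sum>n. norm u ^ 3 / 6 * (1/2)^n)"
  proof (rule suminf_le)
    fix n
    have f: "6 * 2^n \<le> (fact (n+3)::real)" by (rule fact_ge_6_pow)
    have p: "norm u ^ n \<le> 1" using assms by (simp add: power_le_one)
    have "norm (inverse(fact (n + 3)) *\<^sub>R (u ^ (n + 3))) = norm u ^ 3 * (norm u ^ n / fact (n+3))"
      by (simp add: norm_power norm_mult power_add field_simps)
    also have "\<dots> \<le> norm u ^ 3 * (1 / (6 * 2^n))"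
      using f p by (intro mult_left_mono frac_le) auto
    also have "\<dots> = norm u ^ 3 / 6 * (1/2)^n" by (simp add: power_divide)
    finally show "norm (inverse(fact (n + 3)) *\<^sub>R (u ^ (n + 3))) \<le> norm u ^ 3 / 6 * (1/2)^n" .
  next
    have "summable (\<lambda>n. inverse (fact n) * norm u ^ n)"
      using summable_exp[of "norm u"] by (simp add: field_simps)
    then have "summable (\<lambda>n. inverse (fact (n+3)) * norm u ^ (n+3))"
      by (rule summable_ignore_initial_segment)
    then show "summable (\<lambda>n. norm (inverse(fact (n + 3)) *\<^sub>R (u ^ (n + 3))))"
      by (simp add: norm_power)
  next
    show "summable (\<lambda>n. norm u ^ 3 / 6 * (1/2::real)^n)"
      by (intro summable_mult summable_geometric) simp
  qed
  also have "\<dots> = norm u ^ 3 / 3"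
  proof -
    have "(\<lambda>n. norm u ^ 3 / 6 * (1/2::real)^n) sums (norm u ^ 3 / 6 * (1 / (1 - 1/2)))"
      by (intro sums_mult geometric_sums) simp
    then show ?thesis by (simp add: sums_iff)
  qed
  finally show ?thesis .
qed

lemma laurent_bound:
  fixes u :: complex assumes u0: "u \<noteq> 0" and u1: "norm u \<le> 1/2"
  shows "norm (1/(exp u - 1) - 1/u + 1/2) \<le> norm u"
proof -
  define R where "R = exp u - 1 - u - u^2/2"
  define \<epsilon> where "\<epsilon> = R / u"
  define D where "D = 1 + u/2 + \<epsilon>"
  have nu: "norm u > 0" using u0 by simp
  have R: "norm R \<le> norm u ^ 3 / 3" unfolding R_def using exp_rem3 u1 by simp
  have ep: "norm \<epsilon> \<le> norm u ^ 2 / 3"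
    using R nu by (simp add: \<epsilon>_def norm_divide field_simps power3_eq_cube power2_eq_square)
  have u2: "norm u ^ 2 \<le> 1/4"
  proof -
    have "norm u ^ 2 \<le> (1/2)^2" using u1 by (intro power_mono) auto
    then show ?thesis by (simp add: power2_eq_square)
  qed
  have ep2: "norm \<epsilon> \<le> 1/12" using ep u2 by simp
  have Dn: "norm D \<ge> 2/3"
  proof -
    have "norm (u/2 + \<epsilon>) \<le> norm u / 2 + norm \<epsilon>"
      using norm_triangle_ineq[of "u/2" \<epsilon>] by (simp add: norm_divide)
    also have "\<dots> \<le> 1/3" using u1 ep2 by simp
    finally have "norm (u/2 + \<epsilon>) \<le> 1/3" .
    moreover have "norm (1::complex) \<le> norm D + norm (u/2 + \<epsilon>)"
      using norm_triangle_ineq4[of D "u/2 + \<epsilon>"] by (simp add: D_def)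
    ultimately show ?thesis by simp
  qed
  have D0: "D \<noteq> 0" using Dn by auto
  have eD: "exp u - 1 = u * D"
    using u0 by (simp add: D_def \<epsilon>_def R_def field_simps power2_eq_square)
  have eq: "1/(exp u - 1) - 1/u + 1/2 = (u^2/4 - \<epsilon> * (1 - u/2)) / (u * D)"
  proof -
    have a: "(1 - D + u*D/2)/(u*D) = 1/(u*D) - D/(u*D) + (u*D/2)/(u*D)"
      by (simp add: diff_divide_distrib add_divide_distrib)
    have b: "D/(u*D) = 1/u" using D0 by simp
    have c: "(u*D/2)/(u*D) = 1/2" using D0 u0 by simp
    have d: "1 - D + u*D/2 = u^2/4 - \<epsilon> * (1 - u/2)"
      by (simp add: D_def algebra_simps power2_eq_square)
    show ?thesis unfolding eD using a b c d by simp
  qed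
  have num: "norm (u^2/4 - \<epsilon> * (1 - u/2)) \<le> 2/3 * norm u ^ 2"
  proof -
    have "norm (1 - u/2) \<le> 5/4"
      using norm_triangle_ineq4[of 1 "u/2"] u1 by (simp add: norm_divide)
    then have "norm (\<epsilon> * (1 - u/2)) \<le> norm u ^ 2 / 3 * (5/4)"
      unfolding norm_mult using ep by (intro mult_mono) auto
    moreover have "norm (u^2/4 - \<epsilon> * (1 - u/2)) \<le> norm (u^2/4) + norm (\<epsilon> * (1 - u/2))"
      by (rule norm_triangle_ineq4)
    moreover have "norm (u^2/4) = norm u ^ 2 / 4" by (simp add: norm_divide norm_power)
    ultimately show ?thesis by simp
  qed
  have "norm (1/(exp u - 1) - 1/u + 1/2) = norm (u^2/4 - \<epsilon> * (1 - u/2)) / (norm u * norm D)"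
    unfolding eq by (simp add: norm_divide norm_mult)
  also have "\<dots> \<le> (2/3 * norm u ^ 2) / (norm u * (2/3))"
    using num Dn nu by (intro frac_le mult_left_mono) auto
  also have "\<dots> = norm u" using nu by (simp add: power2_eq_square)
  finally show ?thesis .
qed



lemma infsum_suminf_norm:
  fixes h :: "nat \<Rightarrow> real"
  assumes "summable (\<lambda>n. norm (h n))"
  shows "infsum h UNIV = suminf h"
proof -
  have "summable h" using assms by (rule summable_norm_cancel)
  then have "h sums suminf h" by (rule summable_sums)
  then have "(h has_sum suminf h) UNIV" using assms norm_summable_imp_has_sum by blast
  then show ?thesis by (rule infsumI)
qed

lemma geom_maj_sum:
  fixes r C :: real assumes "0 \<le> r" "r < 1"
  shows "(\<lambda>n. C * r^j * r^n) sums (C * r^j / (1 - r))"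
  using sums_mult[OF geometric_sums[of r], of "C * r^j"] assms by (simp add: field_simps)

lemma suminf_swap_majorant:
  fixes f :: "nat \<Rightarrow> nat \<Rightarrow> real" and r C :: real
  assumes r0: "0 \<le> r" and r1: "r < 1" and fb: "\<And>j n. \<bar>f j n\<bar> \<le> C * r^j * r^n"
  shows "(\<Sum>j. \<Sum>n. f j n) = (\<Sum>n. \<Sum>j. f j n)"
proof -
  have C0: "C \<ge> 0" using fb[of 0 0] by simp
  have gnn: "\<And>j n. 0 \<le> C * r^j * r^n" using C0 r0 by simp
  define g where "g = (\<lambda>(j::nat,n::nat). C * r^j * r^n)"
  have gsum: "g summable_on Sigma UNIV (\<lambda>_. UNIV)"
  proof (rule summable_on_SigmaI[where g = "\<lambda>j. C * r^j / (1 - r)"])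
    fix j :: nat
    show "((\<lambda>n. g (j, n)) has_sum (C * r^j / (1 - r))) UNIV"
      unfolding g_def using geom_maj_sum[OF r0 r1, of C j] gnn
      by (intro sums_nonneg_imp_has_sum) auto
  next
    have "summable (\<lambda>j. C / (1 - r) * r^j)" using r0 r1 by (intro summable_mult summable_geometric) auto
    then show "(\<lambda>j. C * r^j / (1 - r)) summable_on UNIV"
      using r0 r1 C0 by (intro summable_nonneg_imp_summable_on) (auto simp: field_simps)
  next
    fix j n show "0 \<le> g (j, n)" unfolding g_def using gnn by simp
  qed
  have gabs: "(\<lambda>x. norm (g x)) summable_on UNIV"
  proof -
    have "(\<lambda>x. norm (g x)) = g" unfolding g_def using gnn by (auto simp: fun_eq_iff)
    then show ?thesis using gsum by simp
  qed
  have fabs: "(\<lambda>x. norm ((\<lambda>(j, n). f j n) x)) summable_on UNIV"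
    by (rule Infinite_Sum.abs_summable_on_comparison_test[OF gabs]) (auto simp: g_def fb gnn)
  have fs: "(\<lambda>(j, n). f j n) summable_on UNIV \<times> UNIV"
    using Infinite_Sum.abs_summable_summable[OF fabs] by simp
  have swap: "(\<Sum>\<^sub>\<infinity>j. \<Sum>\<^sub>\<infinity>n. f j n) = (\<Sum>\<^sub>\<infinity>n. \<Sum>\<^sub>\<infinity>j. f j n)"
    by (rule infsum_swap_banach[OF fs])
  have in1: "\<And>j. summable (\<lambda>n. norm (f j n))"
  proof -
    fix j
    have "summable (\<lambda>n. C * r^j * r^n)" by (rule sums_summable[OF geom_maj_sum[OF r0 r1]])
    moreover have "\<And>n. norm (norm (f j n)) \<le> C * r^j * r^n" using fb by simp
    ultimately show "summable (\<lambda>n. norm (f j n))"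
      using summable_comparison_test'[of "\<lambda>n. C*r^j*r^n" 0 "\<lambda>n. norm (f j n)"] by blast
  qed
  have in2: "\<And>n. summable (\<lambda>j. norm (f j n))"
  proof -
    fix n
    have "summable (\<lambda>j. C * r^n * r^j)" by (rule sums_summable[OF geom_maj_sum[OF r0 r1]])
    moreover have "\<And>j. norm (norm (f j n)) \<le> C * r^n * r^j"
    proof -
      fix j
      have e: "C * r^n * r^j = C * r^j * r^n" by (simp add: mult_ac)
      show "norm (norm (f j n)) \<le> C * r^n * r^j" using fb[of j n] unfolding real_norm_def abs_abs e .
    qed
    ultimately show "summable (\<lambda>j. norm (f j n))"
      using summable_comparison_test'[of "\<lambda>j. C*r^n*r^j" 0 "\<lambda>j. norm (f j n)"] by blast
  qed
  have o1: "summable (\<lambda>j. norm (\<Sum>n. f j n))"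
  proof (rule summable_comparison_test'[of "\<lambda>j. C * r^0 * r^j / (1 - r)" 0])
    show "summable (\<lambda>j. C * r ^ 0 * r ^ j / (1 - r))"
      using summable_divide[OF sums_summable[OF geom_maj_sum[OF r0 r1, of C 0]], of "1-r"] .
  next
    fix j :: nat
    have "norm (\<Sum>n. f j n) \<le> (\<Sum>n. norm (f j n))" by (rule summable_norm[OF in1])
    also have "\<dots> \<le> (\<Sum>n. C * r^j * r^n)"
      using fb in1 sums_summable[OF geom_maj_sum[OF r0 r1]] by (intro suminf_le) auto
    also have "\<dots> = C * r^j / (1-r)" using geom_maj_sum[OF r0 r1] by (simp add: sums_iff)
    finally show "norm (norm (\<Sum>n. f j n)) \<le> C * r ^ 0 * r ^ j / (1 - r)" by simp
  qed
  have o2: "summable (\<lambda>n. norm (\<Sum>j. f j n))"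
  proof (rule summable_comparison_test'[of "\<lambda>n. C * r^0 * r^n / (1 - r)" 0])
    show "summable (\<lambda>n. C * r ^ 0 * r ^ n / (1 - r))"
      using summable_divide[OF sums_summable[OF geom_maj_sum[OF r0 r1, of C 0]], of "1-r"] .
  next
    fix n :: nat
    have "norm (\<Sum>j. f j n) \<le> (\<Sum>j. norm (f j n))" by (rule summable_norm[OF in2])
    also have "\<dots> \<le> (\<Sum>j. C * r^n * r^j)"
    proof (rule suminf_le)
      fix j
      have e: "C * r^n * r^j = C * r^j * r^n" by (simp add: mult_ac)
      show "norm (f j n) \<le> C * r^n * r^j" using fb[of j n] unfolding real_norm_def e .
    qed (use in2 sums_summable[OF geom_maj_sum[OF r0 r1]] in auto)
    also have "\<dots> = C * r^n / (1-r)" using geom_maj_sum[OF r0 r1] by (simp add: sums_iff)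
    finally show "norm (norm (\<Sum>j. f j n)) \<le> C * r ^ 0 * r ^ n / (1 - r)" by simp
  qed
  have "(\<Sum>j. \<Sum>n. f j n) = (\<Sum>\<^sub>\<infinity>j. \<Sum>n. f j n)" using infsum_suminf_norm[OF o1] by simp
  also have "\<dots> = (\<Sum>\<^sub>\<infinity>j. \<Sum>\<^sub>\<infinity>n. f j n)" using infsum_suminf_norm[OF in1] by simp
  also have "\<dots> = (\<Sum>\<^sub>\<infinity>n. \<Sum>\<^sub>\<infinity>j. f j n)" by (rule swap)
  also have "\<dots> = (\<Sum>\<^sub>\<infinity>n. \<Sum>j. f j n)" using infsum_suminf_norm[OF in2] by simp
  also have "\<dots> = (\<Sum>n. \<Sum>j. f j n)" using infsum_suminf_norm[OF o2] by simp
  finally show ?thesis .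
qed



definition beta :: "nat \<Rightarrow> real" where
  "beta n = (1 - (-1)^n) / real n"

lemma beta_nonneg: "0 \<le> beta n"
proof -
  have "(-1::real)^n \<le> 1" by (cases "even n") auto
  then show ?thesis unfolding beta_def by (intro divide_nonneg_nonneg) auto
qed

lemma beta_le2: "beta n \<le> 2"
proof (cases "n = 0")
  case True then show ?thesis by (simp add: beta_def)
next
  case False
  have "1 - (-1::real)^n \<le> 2" by (cases "even n") auto
  moreover have "(1::real) \<le> real n" using False by simp
  ultimately have "(1 - (-1::real)^n) / real n \<le> 2 / 1"
    by (intro frac_le) (auto simp: abs_if)
  then show ?thesis by (simp add: beta_def)
qed

lemma beta_0 [simp]: "beta 0 = 0" by (simp add: beta_def)

lemma S_sums:
  fixes w :: complex assumes "norm w < 1"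
  shows "(\<lambda>n. of_real (beta n) * w^n) sums (ln (1 + w) - ln (1 - w))"
proof -
  have a: "(\<lambda>n. - ((-w)^n) / of_nat n) sums ln (1 + w)" using Ln_series' assms by blast
  have b: "(\<lambda>n. - ((-(-w))^n) / of_nat n) sums ln (1 + (-w))" using Ln_series'[of "-w"] assms by simp
  have "(\<lambda>n. - ((-w)^n) / of_nat n - - ((-(-w))^n) / of_nat n) sums (ln (1 + w) - ln (1 + (-w)))"
    by (rule sums_diff[OF a b])
  moreover have "(\<lambda>n. - ((-w)^n) / of_nat n - - ((-(-w))^n) / of_nat n) = (\<lambda>n. of_real (beta n) * w^n)"
  proof
    fix n
    have e: "of_real (beta n) = ((1 - (-1)^n) / of_nat n :: complex)"
      by (simp add: beta_def)
    show "- ((-w)^n) / of_nat n - - ((-(-w))^n) / of_nat n = of_real (beta n) * w^n"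
      unfolding e by (cases "n = 0") (simp_all add: power_minus[of w] field_simps)
  qed
  ultimately show ?thesis by simp
qed

lemma exp_S:
  fixes w :: complex assumes "norm w < 1"
  shows "exp (ln (1 + w) - ln (1 - w)) = (1 + w) / (1 - w)"
proof -
  have "1 + w \<noteq> 0"
    using assms by (metis add.inverse_inverse add_eq_0_iff norm_minus_cancel norm_one order.irrefl)
  moreover have "1 - w \<noteq> 0" using assms by auto
  ultimately show ?thesis by (simp add: exp_diff)
qed

lemma KB:
  fixes r :: real assumes "0 \<le> r" "r \<le> 1"
  shows "beta n * r^((Suc j)*n) \<le> 2 * r^j * r^n"
proof (cases "n = 0")
  case True then show ?thesis using assms by simp
next
  case False
  have "j + n \<le> Suc j * n" using False by (cases n) auto
  then have "r^(Suc j * n) \<le> r^(j+n)" using assms by (intro power_decreasing) auto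
  also have "\<dots> = r^j * r^n" by (simp add: power_add)
  finally have "r^(Suc j * n) \<le> r^j * r^n" .
  then have "beta n * r^(Suc j * n) \<le> 2 * (r^j * r^n)" using beta_le2[of n] beta_nonneg[of n] assms
    by (intro mult_mono) auto
  then show ?thesis by (simp add: mult.assoc)
qed



lemma norm_pow_lt1: fixes q :: complex assumes "norm q < 1" "n > 0" shows "norm (q^n) < 1"
  using assms by (simp add: norm_power power_less_one_iff)

lemma norm_ratio:
  fixes q :: complex assumes q1: "norm q < 1"
  shows "norm (qpoch_inf (-q) q / qpoch_inf q q) = exp (\<Sum>n. beta n * Re (q^n / (1 - q^n)))"
proof -
  define r where "r = norm q"
  have r0: "0 \<le> r" and r1: "r < 1" using q1 by (auto simp: r_def)
  define L where "L j = ln (1 + q^Suc j) - ln (1 - q^Suc j)" for j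
  have wq: "\<And>j. norm (q^Suc j) < 1" by (rule norm_pow_lt1[OF q1]) simp
  have Ls: "\<And>j. (\<lambda>n. of_real (beta n) * (q^Suc j)^n) sums L j"
    unfolding L_def using S_sums wq by blast
  have nt: "\<And>j n. norm (of_real (beta n) * (q^Suc j)^n) = beta n * r^(Suc j * n)"
  proof -
    fix j n
    have "norm ((q^Suc j)^n) = r^(Suc j * n)" unfolding r_def by (simp only: norm_power power_mult)
    then show "norm (of_real (beta n) * (q^Suc j)^n) = beta n * r^(Suc j * n)"
      by (simp add: norm_mult beta_nonneg)
  qed
  have termb: "\<And>j n. norm (of_real (beta n) * (q^Suc j)^n) \<le> 2 * r^j * r^n"
    unfolding nt using KB r0 r1 by simp
  have tsum: "\<And>j. summable (\<lambda>n. norm (of_real (beta n) * (q^Suc j)^n))"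
  proof -
    fix j
    have "summable (\<lambda>n. 2 * r^j * r^n)" by (rule sums_summable[OF geom_maj_sum[OF r0 r1]])
    then show "summable (\<lambda>n. norm (of_real (beta n) * (q^Suc j)^n))"
      using summable_comparison_test'[of "\<lambda>n. 2 * r^j * r^n" 0 "\<lambda>n. norm (of_real (beta n) * (q^Suc j)^n)"]
        termb by simp
  qed
  have Lb: "\<And>j. norm (L j) \<le> 2 / (1 - r) * r^j"
  proof -
    fix j
    have "L j = (\<Sum>n. of_real (beta n) * (q^Suc j)^n)" using Ls[of j] by (simp add: sums_iff)
    then have "norm (L j) \<le> (\<Sum>n. norm (of_real (beta n) * (q^Suc j)^n))"
      using summable_norm[OF tsum[of j]] by simp
    also have "\<dots> \<le> (\<Sum>n. 2 * r^j * r^n)"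
      by (rule suminf_le[OF termb tsum sums_summable[OF geom_maj_sum[OF r0 r1]]])
    also have "\<dots> = 2 * r^j / (1 - r)" using geom_maj_sum[OF r0 r1] by (simp add: sums_iff)
    finally show "norm (L j) \<le> 2 / (1 - r) * r^j" by simp
  qed
  have Lsum: "summable L"
  proof -
    have "summable (\<lambda>j. 2 / (1 - r) * r^j)" using r0 r1 by (intro summable_mult summable_geometric) auto
    then have "summable (\<lambda>j. norm (L j))"
      using summable_comparison_test'[of "\<lambda>j. 2 / (1 - r) * r^j" 0 "\<lambda>j. norm (L j)"] Lb by simp
    then show ?thesis by (rule summable_norm_cancel)
  qed
  have cp1: "convergent_prod (\<lambda>j. exp (L j))" by (rule convergent_prod_exp[OF Lsum])
  have cp2: "convergent_prod (\<lambda>j. 1 - q^Suc j)"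
  proof -
    have "summable (\<lambda>j. r * r^j)" using r0 r1 by (intro summable_mult summable_geometric) auto
    then have "summable (\<lambda>j. norm (-(q^Suc j)))" by (simp add: norm_power norm_mult r_def)
    moreover have "\<And>j. -(q^Suc j) \<noteq> -1" using wq by (metis minus_equation_iff norm_one order_less_irrefl)
    ultimately have "convergent_prod (\<lambda>j. 1 + -(q^Suc j))"
      by (rule summable_imp_convergent_prod_complex)
    then show ?thesis by simp
  qed
  have nz: "\<And>j. 1 - q^Suc j \<noteq> 0" using wq by (metis eq_iff_diff_eq_0 norm_one order_less_irrefl)
  have Q: "qpoch_inf q q = (\<Prod>j. 1 - q^Suc j)" unfolding qpoch_inf_def by simp
  have Q0: "qpoch_inf q q \<noteq> 0" unfolding Q by (rule prodinf_nonzero[OF cp2 nz])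
  have P: "qpoch_inf (-q) q = (\<Prod>j. exp (L j) * (1 - q^Suc j))"
  proof -
    have "\<And>j. 1 - (-q) * q^j = exp (L j) * (1 - q^Suc j)"
    proof -
      fix j
      have "exp (L j) = (1 + q^Suc j) / (1 - q^Suc j)" unfolding L_def by (rule exp_S[OF wq])
      then show "1 - (-q) * q^j = exp (L j) * (1 - q^Suc j)" using nz[of j] by simp
    qed
    then show ?thesis unfolding qpoch_inf_def by simp
  qed
  have PQ: "qpoch_inf (-q) q = exp (suminf L) * qpoch_inf q q"
    unfolding P Q using prodinf_mult[OF cp1 cp2] prodinf_exp[OF Lsum] by simp
  have ratio: "qpoch_inf (-q) q / qpoch_inf q q = exp (suminf L)" using PQ Q0 by simp
  have ReL: "Re (suminf L) = (\<Sum>j. Re (L j))"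
    using summable_sums[OF Lsum] by (simp add: sums_complex_iff sums_iff)
  define f where "f j n = beta n * Re ((q^Suc j)^n)" for j n
  have ReLj: "\<And>j. Re (L j) = (\<Sum>n. f j n)"
  proof -
    fix j
    have "(\<lambda>n. Re (of_real (beta n) * (q^Suc j)^n)) sums Re (L j)" using Ls[of j] by (simp add: sums_complex_iff)
    then show "Re (L j) = (\<Sum>n. f j n)" by (simp add: f_def sums_iff)
  qed
  have fb: "\<And>j n. \<bar>f j n\<bar> \<le> 2 * r^j * r^n"
  proof -
    fix j n
    have "\<bar>f j n\<bar> = beta n * \<bar>Re ((q^Suc j)^n)\<bar>" by (simp add: f_def abs_mult beta_nonneg)
    also have "\<dots> \<le> beta n * norm ((q^Suc j)^n)" by (intro mult_left_mono abs_Re_le_cmod beta_nonneg)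
    also have "\<dots> = norm (of_real (beta n) * (q^Suc j)^n)" by (simp add: norm_mult beta_nonneg)
    also have "\<dots> \<le> 2 * r^j * r^n" by (rule termb)
    finally show "\<bar>f j n\<bar> \<le> 2 * r^j * r^n" .
  qed
  have sw: "(\<Sum>j. \<Sum>n. f j n) = (\<Sum>n. \<Sum>j. f j n)" by (rule suminf_swap_majorant[OF r0 r1 fb])
  have inner: "\<And>n. (\<Sum>j. f j n) = beta n * Re (q^n / (1 - q^n))"
  proof -
    fix n
    show "(\<Sum>j. f j n) = beta n * Re (q^n / (1 - q^n))"
    proof (cases "n = 0")
      case True then show ?thesis by (simp add: f_def)
    next
      case False
      have qn: "norm (q^n) < 1" using norm_pow_lt1[OF q1] False by simp
      have "(\<lambda>j. q^n * (q^n)^j) sums (q^n * (1 / (1 - q^n)))"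
        by (intro sums_mult geometric_sums qn)
      then have "(\<lambda>j. Re (q^n * (q^n)^j)) sums Re (q^n / (1 - q^n))" by (simp add: sums_complex_iff)
      then have "(\<lambda>j. beta n * Re (q^n * (q^n)^j)) sums (beta n * Re (q^n / (1 - q^n)))"
        by (rule sums_mult)
      moreover have "\<And>j. (q^Suc j)^n = q^n * (q^n)^j"
        by (simp add: power_mult[symmetric] power_mult_distrib mult.commute power_add[symmetric])
      ultimately show ?thesis by (simp add: f_def sums_iff)
    qed
  qed
  have "norm (qpoch_inf (-q) q / qpoch_inf q q) = exp (Re (suminf L))"
    unfolding ratio by (simp add: norm_exp_eq_Re)
  also have "Re (suminf L) = (\<Sum>n. beta n * Re (q^n / (1 - q^n)))"
    unfolding ReL ReLj sw inner ..
  finally show ?thesis .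
qed



definition cc :: "nat \<Rightarrow> real" where "cc n = (1 - (-1)^n) / (real n)^2"

lemma cc_sums: "cc sums (pi^2/4)" unfolding cc_def by (rule odd_basel)

lemma cc_nonneg: "0 \<le> cc n"
proof -
  have "(-1::real)^n \<le> 1" by (cases "even n") auto
  then show ?thesis unfolding cc_def by (intro divide_nonneg_nonneg) auto
qed

lemma beta_cc: "beta n = cc n * real n"
  by (cases "n = 0") (simp_all add: beta_def cc_def power2_eq_square)

lemma cc_le: "cc n \<le> 2 / (real n)^2"
proof (cases "n = 0")
  case True then show ?thesis by (simp add: cc_def)
next
  case False
  have "1 - (-1::real)^n \<le> 2" by (cases "even n") auto
  then show ?thesis unfolding cc_def using False by (intro divide_right_mono) auto
qed

lemma norm_nome_pow:
  "norm (nome \<tau> ^ n) = exp (- 2 * pi * real n * Im \<tau>)"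
proof -
  have "nome \<tau> ^ n = exp (of_nat n * (2 * pi * \<i> * \<tau>))"
    unfolding nome_def by (simp add: exp_of_nat_mult)
  then show ?thesis by (simp add: norm_exp_eq_Re)
qed

lemma Re_frac_abs:
  fixes w :: complex assumes "norm w < 1"
  shows "\<bar>Re (w / (1 - w))\<bar> \<le> norm w / (1 - norm w)"
proof -
  have "1 - norm w \<le> norm (1 - w)" using norm_triangle_ineq2[of 1 w] by simp
  moreover have p: "0 < 1 - norm w" using assms by simp
  ultimately have p2: "0 < norm (1 - w)" by linarith
  have "norm w / norm (1 - w) \<le> norm w / (1 - norm w)"
    by (rule divide_left_mono) (use p p2 \<open>1 - norm w \<le> norm (1 - w)\<close> in auto)
  moreover have "\<bar>Re (w / (1 - w))\<bar> \<le> norm (w / (1 - w))" by (rule abs_Re_le_cmod)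
  ultimately show ?thesis by (simp add: norm_divide)
qed

lemma exp_frac_le: fixes s :: real assumes "s > 0" shows "exp (-s) / (1 - exp (-s)) \<le> 1 / s"
proof -
  have e: "exp (-s) / (1 - exp (-s)) = 1 / (exp s - 1)"
    using assms by (simp add: exp_minus field_simps)
  have "s \<le> exp s - 1" using exp_ge_add_one_self[of s] by linarith
  then show ?thesis unfolding e using assms by (intro divide_left_mono) auto
qed

lemma phi_abs:
  assumes y: "Im \<tau> > 0"
  shows "\<bar>beta n * Re (nome \<tau> ^ n / (1 - nome \<tau> ^ n))\<bar> \<le> cc n / (2 * pi * Im \<tau>)"
proof (cases "n = 0")
  case True then show ?thesis by (simp add: cc_def)
next
  case False
  define s where "s = 2 * pi * real n * Im \<tau>"
  have s0: "s > 0" unfolding s_def using False y by simp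
  have nw: "norm (nome \<tau> ^ n) = exp (-s)" unfolding s_def norm_nome_pow by simp
  have lt: "norm (nome \<tau> ^ n) < 1" unfolding nw using s0 by simp
  have "\<bar>Re (nome \<tau> ^ n / (1 - nome \<tau> ^ n))\<bar> \<le> 1 / s"
    using Re_frac_abs[OF lt] exp_frac_le[OF s0] unfolding nw by linarith
  then have "beta n * \<bar>Re (nome \<tau> ^ n / (1 - nome \<tau> ^ n))\<bar> \<le> beta n * (1 / s)"
    by (rule mult_left_mono[OF _ beta_nonneg])
  then have "\<bar>beta n * Re (nome \<tau> ^ n / (1 - nome \<tau> ^ n))\<bar> \<le> beta n * (1 / s)"
    by (simp add: abs_mult beta_nonneg)
  also have "beta n * (1 / s) = cc n / (2 * pi * Im \<tau>)"
    unfolding beta_cc s_def using False by (simp add: field_simps)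
  finally show ?thesis .
qed

lemma Phi_summable:
  assumes y: "Im \<tau> > 0"
  shows "summable (\<lambda>n. beta n * Re (nome \<tau> ^ n / (1 - nome \<tau> ^ n)))"
proof -
  have "summable (\<lambda>n. cc n / (2 * pi * Im \<tau>))"
    using summable_divide[OF sums_summable[OF cc_sums]] by simp
  moreover have "\<And>n. norm (beta n * Re (nome \<tau> ^ n / (1 - nome \<tau> ^ n))) \<le> cc n / (2 * pi * Im \<tau>)"
    using phi_abs[OF y] by (simp only: real_norm_def)
  ultimately show ?thesis
    by (rule summable_comparison_test')
qed

lemma Phi_le_triv:
  assumes y: "Im \<tau> > 0"
  shows "beta n * Re (nome \<tau> ^ n / (1 - nome \<tau> ^ n)) \<le> cc n / (2 * pi * Im \<tau>)"
  using phi_abs[OF y, of n] by linarith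

lemma nome_norm_lt1: assumes "Im \<tau> > 0" shows "norm (nome \<tau>) < 1"
  using norm_nome_pow[of \<tau> 1] assms by simp



lemma one_minus_cos_bound:
  fixes x :: real assumes "\<bar>x\<bar> \<le> 1/2"
  shows "pi^2 * x^2 / 2 \<le> 1 - cos (2 * pi * x)"
proof -
  define s where "s = pi * \<bar>x\<bar>"
  have s0: "0 \<le> s" unfolding s_def by simp
  have pi32: "pi \<le> 3.2" using pi_approx by simp
  have s2: "s^2 \<le> 3"
  proof -
    have "s \<le> pi / 2" unfolding s_def using assms by (simp add: mult_left_mono[of _ "1/2" pi, simplified] )
    then have "s^2 \<le> (pi/2)^2" using s0 by (intro power_mono) auto
    also have "\<dots> \<le> (3.2/2)^2" using pi32 pi_gt3 by (intro power_mono) auto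
    also have "(3.2/2)^2 \<le> (3::real)" by (simp add: power2_eq_square)
    finally show ?thesis .
  qed
  have mb: "\<bar>sin s - (\<Sum>m<3. sin_coeff m * s ^ m)\<bar> \<le> inverse (fact 3) * \<bar>s\<bar> ^ 3"
    by (rule Maclaurin_sin_bound)
  have sumeq: "(\<Sum>m<3. sin_coeff m * s ^ m) = s"
    by (simp add: eval_nat_numeral lessThan_Suc sin_coeff_def)
  have "\<bar>sin s - s\<bar> \<le> inverse (fact 3) * \<bar>s\<bar> ^ 3" using mb unfolding sumeq .
  moreover have "inverse (fact 3) * \<bar>s\<bar> ^ 3 = s^3/6" using s0 by (simp add: eval_nat_numeral)
  ultimately have "\<bar>sin s - s\<bar> \<le> s^3/6" by simp
  then have "-(sin s - s) \<le> s^3/6" by (rule abs_le_D2)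
  then have "sin s \<ge> s - s^3/6" by linarith
  moreover have "s^3/6 \<le> s/2"
  proof -
    have "s^3 = s * s^2" by (simp add: power2_eq_square power3_eq_cube)
    also have "\<dots> \<le> s * 3" using s2 s0 by (intro mult_left_mono) auto
    finally show ?thesis by simp
  qed
  ultimately have sb: "s/2 \<le> sin s" by simp
  have "(s/2)^2 \<le> (sin s)^2" using sb s0 by (intro power_mono) auto
  moreover have "cos (2 * pi * x) = cos (2 * s)"
  proof (cases "x \<ge> 0")
    case True then have "2 * s = 2 * pi * x" by (simp add: s_def)
    then show ?thesis by (simp only:)
  next
    case False then have "2 * s = -(2 * pi * x)" by (simp add: s_def)
    then show ?thesis by (simp only: cos_minus)
  qed
  moreover have "cos (2 * s) = 1 - 2 * (sin s)^2" by (rule cos_double_sin)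
  moreover have "(s/2)^2 = pi^2 * x^2 / 4" unfolding s_def power_divide power_mult_distrib power2_abs by simp
  ultimately show ?thesis by simp
qed

lemma Re_frac_upper:
  fixes w :: complex and r c :: real
  assumes nw: "norm w = r" and r0: "0 < r" and r1: "r < 1" and rw: "Re w = r * c" and c1: "c < 1"
  shows "Re (w / (1 - w)) \<le> (1 - r) / (2 * (1 - c))"
proof -
  have sq: "(Re w)^2 + (Im w)^2 = r^2" using nw cmod_power2[of w] by simp
  have c1': "c \<le> 1" using c1 by simp
  have den: "(Re (1 - w))^2 + (Im (1 - w))^2 = (1 - r)^2 + 2 * r * (1 - c)"
    using sq rw by (simp add: power2_eq_square algebra_simps)
  have num: "Re w * Re (1 - w) + Im w * Im (1 - w) = r * (c - r)"
    using sq rw by (simp add: power2_eq_square algebra_simps)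
  have e: "Re (w / (1 - w)) = r * (c - r) / ((1 - r)^2 + 2 * r * (1 - c))"
    unfolding Re_divide num den ..
  have dpos: "2 * r * (1 - c) > 0" using r0 c1 by simp
  have dge: "(1 - r)^2 + 2 * r * (1 - c) \<ge> 2 * r * (1 - c)" by simp
  show ?thesis
  proof (cases "c \<le> r")
    case True
    then have "r * (c - r) \<le> 0" using r0 by (simp add: mult_nonneg_nonpos)
    moreover have dp: "0 < (1 - r)^2 + 2 * r * (1 - c)" using dpos dge by linarith
    ultimately have "Re (w / (1 - w)) \<le> 0" unfolding e
      by (rule divide_nonpos_pos)
    moreover have "r \<le> 1" using r1 by simp
    then have "0 \<le> (1 - r) / (2 * (1 - c))" using c1 by simp
    ultimately show ?thesis by linarith
  next
    case False
    have "r * (c - r) \<le> r * (1 - r)" using c1' r0 by (intro mult_left_mono) auto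
    then have "Re (w / (1 - w)) \<le> r * (1 - r) / (2 * r * (1 - c))"
      unfolding e using dpos dge False r0 by (intro frac_le) auto
    also have "\<dots> = (1 - r) / (2 * (1 - c))" using r0 by simp
    finally show ?thesis .
  qed
qed

lemma tail_inv_sq:
  assumes K: "K \<ge> (1::nat)"
  shows "summable (\<lambda>n. 1 / (real (n + K + 1))^2) \<and> (\<Sum>n. 1 / (real (n + K + 1))^2) \<le> 1 / real K"
proof -
  define g where "g n = 1 / real (n + K)" for n
  have gl: "g \<longlonglongrightarrow> 0"
    unfolding g_def using LIMSEQ_ignore_initial_segment[OF lim_inverse_n', of K] by simp
  have tel: "(\<lambda>n. g n - g (Suc n)) sums (g 0 - 0)" by (rule telescope_sums'[OF gl])
  have b: "\<And>n. 1 / (real (n + K + 1))^2 \<le> g n - g (Suc n)"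
  proof -
    fix n
    have p: "real (n + K) > 0" using K by simp
    have "g n - g (Suc n) = 1 / (real (n + K) * real (n + K + 1))"
      unfolding g_def using p by (simp add: field_simps)
    also have "\<dots> \<ge> 1 / (real (n + K + 1))^2"
      using p by (intro divide_left_mono) (auto simp: power2_eq_square intro!: mult_right_mono)
    finally show "1 / (real (n + K + 1))^2 \<le> g n - g (Suc n)" .
  qed
  have s: "summable (\<lambda>n. 1 / (real (n + K + 1))^2)"
    by (rule summable_comparison_test'[OF sums_summable[OF tel], of 0]) (use b in auto)
  have "(\<Sum>n. 1 / (real (n + K + 1))^2) \<le> (\<Sum>n. g n - g (Suc n))"
    by (rule suminf_le[OF b s sums_summable[OF tel]])
  also have "\<dots> = 1 / real K" using tel by (simp add: sums_iff g_def)
  finally show ?thesis using s by simp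
qed



lemma beta_times_n: "beta n * real n \<le> 2"
proof (cases "n = 0")
  case True then show ?thesis by simp
next
  case False
  then have "beta n * real n = 1 - (-1)^n" by (simp add: beta_def)
  moreover have "1 - (-1::real)^n \<le> 2" by (cases "even n") auto
  ultimately show ?thesis by simp
qed

lemma head_term:
  fixes x y :: real and n :: nat
  assumes y: "0 < y" and yx: "y \<le> \<bar>x\<bar>" and n1: "1 \<le> n"
    and nb: "2 * pi * real n * cmod (Complex x y) \<le> 1/2"
  shows "beta n * Re (nome (Complex x y) ^ n / (1 - nome (Complex x y) ^ n))
           \<le> cc n / (4 * pi * y) + 4 * pi * cmod (Complex x y)"
proof -
  define \<tau> where "\<tau> = Complex x y"
  define t where "t = cmod \<tau>"
  define E where "E = nome \<tau> ^ n"
  define u where "u = - (of_nat n * (2 * pi * \<i> * \<tau>))"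
  have t2: "t^2 = x^2 + y^2" unfolding t_def \<tau>_def using cmod_power2[of "Complex x y"] by simp
  have tpos: "t > 0" unfolding t_def \<tau>_def using y by (simp add: complex_eq_iff)
  have npos: "real n \<ge> 1" using n1 by simp
  have nu: "norm u = 2 * pi * real n * t"
    unfolding u_def t_def by (simp add: norm_mult)
  have u0: "u \<noteq> 0" using nu tpos npos by auto
  have nu2: "norm u \<le> 1/2" using nu nb unfolding t_def \<tau>_def by simp
  have Eexp: "E = exp (of_nat n * (2 * pi * \<i> * \<tau>))"
    unfolding E_def nome_def by (simp add: exp_of_nat_mult)
  have E0: "E \<noteq> 0" unfolding Eexp by simp
  have nE: "norm E < 1"
    unfolding E_def using norm_nome_pow[of \<tau> n] y npos by (simp add: \<tau>_def)
  have E1: "1 - E \<noteq> 0" using nE by auto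
  have eu: "exp u = inverse E" unfolding u_def Eexp by (simp add: exp_minus)
  have frac: "E / (1 - E) = 1 / (exp u - 1)"
    unfolding eu using E0 E1 by (simp add: field_simps)
  have Reu: "Re u = 2 * pi * real n * y" and Imu: "Im u = - (2 * pi * real n * x)"
    unfolding u_def \<tau>_def by simp_all
  have Re1u: "Re (1 / u) \<le> 1 / (4 * pi * real n * y)"
  proof -
    have "Re (1 / u) = Re u / ((Re u)^2 + (Im u)^2)" by (simp add: Re_divide)
    also have "(Re u)^2 + (Im u)^2 = (2 * pi * real n)^2 * (x^2 + y^2)"
      unfolding Reu Imu by (simp add: power2_eq_square algebra_simps)
    also have "Re u / \<dots> \<le> (2 * pi * real n * y) / ((2 * pi * real n)^2 * (2 * y^2))"
    proof (rule frac_le)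
      show "0 \<le> 2 * pi * real n * y" using y by simp
      show "Re u \<le> 2 * pi * real n * y" unfolding Reu by simp
      show "0 < (2 * pi * real n)^2 * (2 * y^2)" using y npos by simp
      have "2 * y^2 \<le> x^2 + y^2"
      proof -
        have "y^2 \<le> x^2" using yx y by (metis abs_of_pos power2_abs power_mono less_imp_le)
        then show ?thesis by simp
      qed
      then show "(2 * pi * real n)^2 * (2 * y^2) \<le> (2 * pi * real n)^2 * (x^2 + y^2)"
        by (intro mult_left_mono) auto
    qed
    also have "\<dots> = 1 / (4 * pi * real n * y)" using y npos by (simp add: power2_eq_square field_simps)
    finally show ?thesis .
  qed
  have L: "norm (1/(exp u - 1) - 1/u + 1/2) \<le> norm u" by (rule laurent_bound[OF u0 nu2])
  have "Re (1/(exp u - 1) - 1/u + 1/2) \<le> norm u"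
    using L complex_Re_le_cmod order_trans by blast
  then have "Re (1/(exp u - 1)) \<le> Re (1/u) - 1/2 + norm u" by simp
  also have "\<dots> \<le> 1 / (4 * pi * real n * y) + 2 * pi * real n * t" using Re1u nu by simp
  finally have ReE: "Re (E / (1 - E)) \<le> 1 / (4 * pi * real n * y) + 2 * pi * real n * t"
    unfolding frac .
  have "beta n * Re (E / (1 - E)) \<le> beta n * (1 / (4 * pi * real n * y) + 2 * pi * real n * t)"
    by (rule mult_left_mono[OF ReE beta_nonneg])
  also have "\<dots> = cc n / (4 * pi * y) + (beta n * real n) * (2 * pi * t)"
    unfolding beta_cc using npos y by (simp add: field_simps)
  also have "(beta n * real n) * (2 * pi * t) \<le> 2 * (2 * pi * t)"
    using beta_times_n tpos by (intro mult_right_mono) auto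
  finally show ?thesis unfolding E_def t_def \<tau>_def by simp
qed



lemma pi_sq_le10: "pi^2 \<le> (10::real)" "pi * pi \<le> (10::real)"
proof -
  have "pi \<le> 3.15" using pi_approx by simp
  then have "pi^2 \<le> 3.15^2" using pi_gt3 by (intro power_mono) auto
  then show "pi^2 \<le> (10::real)" by (simp add: power2_eq_square)
  then show "pi * pi \<le> (10::real)" by (simp add: power2_eq_square)
qed

lemma Phi_case1:
  assumes y: "0 < y" and y1: "1/100 \<le> y"
  shows "(\<Sum>n. beta n * Re (nome (Complex x y) ^ n / (1 - nome (Complex x y) ^ n))) \<le> pi / (16 * y) + 50"
proof -
  define \<tau> where "\<tau> = Complex x y"
  have Im: "Im \<tau> = y" unfolding \<tau>_def by simp
  have yI: "Im \<tau> > 0" using y Im by simp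
  have cs: "(\<lambda>n. cc n / (2 * pi * y)) sums ((pi^2/4) / (2 * pi * y))"
    by (rule sums_divide[OF cc_sums])
  have "(\<Sum>n. beta n * Re (nome \<tau> ^ n / (1 - nome \<tau> ^ n))) \<le> (\<Sum>n. cc n / (2 * pi * y))"
    using Phi_le_triv[OF yI] Phi_summable[OF yI] sums_summable[OF cs] unfolding Im
    by (intro suminf_le) auto
  also have "\<dots> = (pi^2/4) / (2 * pi * y)" using cs by (simp add: sums_iff)
  also have "\<dots> = pi / (16 * y) + pi / (16 * y)" using y by (simp add: field_simps power2_eq_square)
  finally have A: "(\<Sum>n. beta n * Re (nome \<tau> ^ n / (1 - nome \<tau> ^ n))) \<le> pi / (16 * y) + pi / (16 * y)" .
  have "pi / (16 * y) \<le> 50"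
  proof -
    have "pi / (16 * y) \<le> pi / (16 * (1/100))" using y y1 by (intro divide_left_mono) auto
    also have "\<dots> \<le> 50" using pi_less_4 by simp
    finally show ?thesis .
  qed
  with A show ?thesis unfolding \<tau>_def by simp
qed



lemma Phi_case2:
  assumes y: "0 < y" and yx: "y \<le> \<bar>x\<bar>" and y1: "y < 1/100" and x5: "\<bar>x\<bar> \<le> 5 * y"
  shows "(\<Sum>n. beta n * Re (nome (Complex x y) ^ n / (1 - nome (Complex x y) ^ n))) \<le> pi / (16 * y) + 50"
proof -
  define \<tau> where "\<tau> = Complex x y"
  define \<phi> where "\<phi> n = beta n * Re (nome \<tau> ^ n / (1 - nome \<tau> ^ n))" for n
  define t where "t = cmod \<tau>"
  have Im: "Im \<tau> = y" unfolding \<tau>_def by simp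
  have yI: "Im \<tau> > 0" using y Im by simp
  have t2: "t^2 = x^2 + y^2" unfolding t_def \<tau>_def using cmod_power2[of "Complex x y"] by simp
  have tpos: "t > 0" unfolding t_def \<tau>_def using y by (simp add: complex_eq_iff)
  have t6: "t \<le> 6 * y"
  proof -
    have "x^2 \<le> (5*y)^2" using x5 by (metis abs_ge_zero power2_abs power_mono)
    then have x25: "x^2 \<le> 25 * y^2" by (simp add: power_mult_distrib)
    have yy: "0 \<le> y^2" by simp
    have "x^2 + y^2 \<le> 36 * y^2" using x25 yy by linarith
    then have t2b: "t^2 \<le> (6 * y)^2" unfolding t2 by (simp add: power_mult_distrib)
    have "0 \<le> 6 * y" using y by simp
    with t2b show ?thesis by (rule power2_le_imp_le)
  qed
  define M where "M = 1 / (4 * pi * t)"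
  define K where "K = nat \<lfloor>M\<rfloor>"
  have M1: "M \<ge> 1"
  proof -
    have "4 * pi * t \<le> 4 * pi * (6 * y)" using t6 by simp
    also have "\<dots> \<le> 4 * 4 * (6 * (1/100))" using pi_less_4 y1 y
      by (intro mult_mono) auto
    also have "\<dots> \<le> 1" by simp
    finally have "4 * pi * t \<le> 1" .
    then show ?thesis unfolding M_def using tpos by simp
  qed
  have KM: "real K \<le> M" and MK: "M < real K + 1"
    unfolding K_def using M1 by (simp_all add: of_nat_nat)
  have K1: "K \<ge> 1" unfolding K_def using M1 by (simp add: le_nat_iff)
  have Mt: "M * (4 * pi * t) = 1" unfolding M_def using tpos by simp
  have sumphi: "summable \<phi>" unfolding \<phi>_def by (rule Phi_summable[OF yI])
  have split: "suminf \<phi> = (\<Sum>n. \<phi> (n + (K+1))) + (\<Sum>i<K+1. \<phi> i)"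
    by (rule suminf_split_initial_segment[OF sumphi])
  have hb: "\<And>i. i < K + 1 \<Longrightarrow> \<phi> i \<le> cc i / (4 * pi * y) + 4 * pi * t"
  proof -
    fix i assume i: "i < K + 1"
    show "\<phi> i \<le> cc i / (4 * pi * y) + 4 * pi * t"
    proof (cases "i = 0")
      case True then show ?thesis using tpos by (simp add: \<phi>_def cc_def)
    next
      case False
      have "2 * pi * real i * t \<le> 2 * pi * M * t"
        using i KM tpos by (intro mult_right_mono mult_left_mono) auto
      also have "\<dots> = 1/2" using Mt by (simp add: algebra_simps)
      finally have nb: "2 * pi * real i * cmod (Complex x y) \<le> 1/2" by (simp add: t_def \<tau>_def)
      have "1 \<le> i" using False by simp
      from head_term[OF y yx this nb] show ?thesis by (simp add: \<phi>_def t_def \<tau>_def)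
    qed
  qed
  have head: "(\<Sum>i<K+1. \<phi> i) \<le> pi / (16 * y) + 2"
  proof -
    have "(\<Sum>i<K+1. \<phi> i) \<le> (\<Sum>i<K+1. cc i / (4 * pi * y) + 4 * pi * t)"
      by (rule sum_mono) (use hb in auto)
    also have "\<dots> = (\<Sum>i<K+1. cc i) / (4 * pi * y) + real (K+1) * (4 * pi * t)"
      by (simp only: sum.distrib sum_divide_distrib[symmetric] sum_constant card_lessThan)
    also have "(\<Sum>i<K+1. cc i) \<le> pi^2/4"
    proof -
      have "(\<Sum>i<K+1. cc i) \<le> suminf cc"
        by (rule sum_le_suminf[OF sums_summable[OF cc_sums]]) (auto simp: cc_nonneg)
      then show ?thesis using cc_sums by (simp add: sums_iff)
    qed
    also have "real (K+1) * (4 * pi * t) \<le> (M + 1) * (4 * pi * t)"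
      using KM tpos by (intro mult_right_mono) auto
    also have "(M + 1) * (4 * pi * t) = 1 + 4 * pi * t" using Mt by (simp add: algebra_simps)
    also have "4 * pi * t \<le> 1"
    proof -
      have "4 * pi * t \<le> 4 * pi * (6 * y)" using t6 by simp
      also have "\<dots> \<le> 4 * 4 * (6 * (1/100))" using pi_less_4 y1 y
        by (intro mult_mono) auto
      finally show ?thesis by simp
    qed
    finally have "(\<Sum>i<K+1. \<phi> i) \<le> pi^2/4 / (4 * pi * y) + (1 + 1)" using y by (simp add: divide_right_mono)
    also have "pi^2/4 / (4 * pi * y) = pi / (16 * y)" using y by (simp add: power2_eq_square field_simps)
    finally show ?thesis by simp
  qed
  have TI: "summable (\<lambda>n. 1 / (real (n + K + 1))^2) \<and> (\<Sum>n. 1 / (real (n + K + 1))^2) \<le> 1 / real K"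
    by (rule tail_inv_sq[OF K1])
  have tail: "(\<Sum>n. \<phi> (n + (K+1))) \<le> 48"
  proof -
    have tb: "\<And>n. \<phi> (n + (K+1)) \<le> 1 / (pi * y) * (1 / (real (n + K + 1))^2)"
    proof -
      fix n
      have "\<phi> (n + (K+1)) \<le> cc (n + (K+1)) / (2 * pi * y)"
        unfolding \<phi>_def using Phi_le_triv[OF yI, of "n + (K+1)"] unfolding Im .
      also have "\<dots> \<le> (2 / (real (n + (K+1)))^2) / (2 * pi * y)"
        using y cc_le[of "n + (K+1)"] by (intro divide_right_mono) auto
      also have "\<dots> = 1 / (pi * y) * (1 / (real (n + K + 1))^2)" by (simp add: field_simps)
      finally show "\<phi> (n + (K+1)) \<le> 1 / (pi * y) * (1 / (real (n + K + 1))^2)" .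
    qed
    have "(\<Sum>n. \<phi> (n + (K+1))) \<le> (\<Sum>n. 1 / (pi * y) * (1 / (real (n + K + 1))^2))"
      by (rule suminf_le[OF tb summable_ignore_initial_segment[OF sumphi] summable_mult[OF conjunct1[OF TI]]])
    also have "\<dots> = 1 / (pi * y) * (\<Sum>n. 1 / (real (n + K + 1))^2)"
      by (rule suminf_mult[OF conjunct1[OF TI]])
    also have "\<dots> \<le> 1 / (pi * y) * (1 / real K)"
      using TI y by (intro mult_left_mono) auto
    also have "1 / (pi * y) * (1 / real K) \<le> 1 / (pi * y) * (8 * pi * t)"
    proof -
      have "M < 2 * real K" using MK K1 by simp
      then have "1 / real K \<le> 2 / M" using M1 K1 by (simp add: field_simps)
      also have "2 / M = 8 * pi * t" unfolding M_def using tpos by simp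
      finally have "1 / real K \<le> 8 * pi * t" .
      then show ?thesis using y by (intro mult_left_mono) auto
    qed
    also have "1 / (pi * y) * (8 * pi * t) = 8 * t / y" by simp
    also have "\<dots> \<le> 8 * (6 * y) / y" using t6 y by (intro divide_right_mono) auto
    also have "\<dots> = 48" using y by simp
    finally show ?thesis .
  qed
  have "suminf \<phi> \<le> pi / (16 * y) + 50" using split head tail by simp
  then show ?thesis unfolding \<phi>_def \<tau>_def .
qed



lemma Phi_case3:
  assumes y: "0 < y" and y1: "y < 1/100" and x5: "5 * y < \<bar>x\<bar>" and x2: "\<bar>x\<bar> \<le> 1/2"
  shows "(\<Sum>n. beta n * Re (nome (Complex x y) ^ n / (1 - nome (Complex x y) ^ n))) \<le> pi / (16 * y) + 50"
proof -
  define \<tau> where "\<tau> = Complex x y"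
  define \<phi> where "\<phi> n = beta n * Re (nome \<tau> ^ n / (1 - nome \<tau> ^ n))" for n
  define q where "q = nome \<tau>"
  define r where "r = exp (- 2 * pi * y)"
  define c where "c = cos (2 * pi * x)"
  have Im: "Im \<tau> = y" unfolding \<tau>_def by simp
  have yI: "Im \<tau> > 0" using y Im by simp
  have sumphi: "summable \<phi>" unfolding \<phi>_def by (rule Phi_summable[OF yI])
  have split: "suminf \<phi> = (\<Sum>n. \<phi> (n + 2)) + (\<Sum>i<2. \<phi> i)"
    by (rule suminf_split_initial_segment[OF sumphi])
  have cc01: "(\<Sum>i<2. cc i) = 2" by (simp add: eval_nat_numeral cc_def)
  have cs2: "(\<lambda>n. cc (n + 2) / (2 * pi * y)) sums ((pi^2/4 - 2) / (2 * pi * y))"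
    using sums_divide[OF sums_split_initial_segment[OF cc_sums, of 2]] unfolding cc01 .
  have tail: "(\<Sum>n. \<phi> (n + 2)) \<le> (pi^2/4 - 2) / (2 * pi * y)"
  proof -
    have "(\<Sum>n. \<phi> (n + 2)) \<le> (\<Sum>n. cc (n + 2) / (2 * pi * y))"
    proof (rule suminf_le)
      fix n show "\<phi> (n + 2) \<le> cc (n + 2) / (2 * pi * y)"
        unfolding \<phi>_def using Phi_le_triv[OF yI, of "n + 2"] unfolding Im .
    qed (use summable_ignore_initial_segment[OF sumphi, of 2] sums_summable[OF cs2] in simp_all)
    then show ?thesis using cs2 by (simp add: sums_iff)
  qed
  have phi01: "(\<Sum>i<2. \<phi> i) = 2 * Re (q / (1 - q))"
    by (simp add: eval_nat_numeral \<phi>_def beta_def q_def)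
  have nq: "norm q = r" unfolding q_def r_def using norm_nome_pow[of \<tau> 1] Im by simp
  have r0: "0 < r" unfolding r_def by simp
  have r1: "r < 1" unfolding r_def using y by simp
  have Req: "Re q = r * c"
    unfolding q_def nome_def r_def c_def \<tau>_def by (simp add: Re_exp)
  have cb: "pi^2 * x^2 / 2 \<le> 1 - c" unfolding c_def by (rule one_minus_cos_bound[OF x2])
  have xpos: "x^2 > 25 * y^2"
  proof -
    have "(5 * y)^2 < \<bar>x\<bar>^2" using x5 y by (intro power_strict_mono) auto
    then show ?thesis by (simp add: power_mult_distrib)
  qed
  have x2pos: "x^2 > 0" using xpos zero_le_power2[of y] by linarith
  have cpos: "pi^2 * x^2 / 2 > 0" using x2pos by simp
  have c1: "c < 1" using cb cpos by linarith
  have Rq: "Re (q / (1 - q)) \<le> (1 - r) / (2 * (1 - c))" by (rule Re_frac_upper[OF nq r0 r1 Req c1])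
  have r2: "1 - r \<le> 2 * pi * y"
    unfolding r_def using exp_ge_add_one_self[of "- 2 * pi * y"] by simp
  have "2 * Re (q / (1 - q)) \<le> (1 - r) / (1 - c)" using Rq c1 by (simp add: field_simps)
  also have "\<dots> \<le> (2 * pi * y) / (pi^2 * (25 * y^2) / 2)"
  proof (rule frac_le)
    show "0 \<le> 2 * pi * y" using y by simp
    show "1 - r \<le> 2 * pi * y" by (rule r2)
    show "0 < pi^2 * (25 * y^2) / 2" using y by simp
    have "pi^2 * (25 * y^2) / 2 \<le> pi^2 * x^2 / 2" using xpos by simp
    then show "pi^2 * (25 * y^2) / 2 \<le> 1 - c" using cb by linarith
  qed
  also have "\<dots> = 4 / (25 * pi * y)" using y by (simp add: field_simps power2_eq_square)
  finally have p1: "2 * Re (q / (1 - q)) \<le> 4 / (25 * pi * y)" .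
  have num: "4 / (25 * pi) + (pi^2/4 - 2) / (2 * pi) \<le> pi / 16"
  proof -
    have e: "4 / (25 * pi) + (pi^2/4 - 2) / (2 * pi) = (50 * pi^2 - 336) / (400 * pi)"
      by (simp add: field_simps power2_eq_square)
    have "(50 * pi^2 - 336) / (400 * pi) \<le> (25 * pi^2) / (400 * pi)"
      using pi_sq_le10 by (intro divide_right_mono) auto
    also have "\<dots> = pi / 16" by (simp add: power2_eq_square)
    finally show ?thesis unfolding e .
  qed
  have "suminf \<phi> \<le> (pi^2/4 - 2) / (2 * pi * y) + 4 / (25 * pi * y)"
    using split tail phi01 p1 by simp
  also have "\<dots> = (4 / (25 * pi) + (pi^2/4 - 2) / (2 * pi)) / y" using y by (simp add: field_simps)
  also have "\<dots> \<le> (pi / 16) / y" using num y by (intro divide_right_mono) auto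
  also have "\<dots> \<le> pi / (16 * y) + 50" by simp
  finally show ?thesis unfolding \<phi>_def \<tau>_def .
qed



lemma f0_bound:
  assumes y: "Im \<tau> > 0" and a: "a \<ge> 1" and b: "b \<ge> 1"
  shows "norm (f0 a b \<tau>) \<le> 1 / (2 * pi * Im \<tau>)"
proof -
  define y where "y = Im \<tau>"
  define r where "r = exp (- (2 * pi * y))"
  have y0: "y > 0" using y by (simp add: y_def)
  have r0: "0 \<le> r" and r1: "r < 1" unfolding r_def using y0 by auto
  define T where "T m = (-1) ^ Suc m * exp (2 * pi * \<i> * \<tau> * of_real ((of_int a * real (Suc m) ^ 2 + of_int b * real (Suc m)) / 2))" for m
  have f0eq: "f0 a b \<tau> = suminf T" unfolding f0_def T_def Let_def ..
  have Tb: "\<And>m. norm (T m) \<le> r * r^m"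
  proof -
    fix m
    define n where "n = real (Suc m)"
    define s where "s = (of_int a * n ^ 2 + of_int b * n) / 2"
    have n1: "n \<ge> 1" unfolding n_def by simp
    have sn: "s \<ge> n"
    proof -
      have "n \<le> n^2" using n1 by (simp add: power2_eq_square)
      moreover have "n \<le> of_int a * n^2" using a n1 \<open>n \<le> n^2\<close>
        by (metis mult_1 mult_right_mono of_int_1_le_iff order_trans zero_le_power2)
      moreover have "n \<le> of_int b * n" using b n1 by (simp add: mult_right_mono)
      ultimately show ?thesis unfolding s_def by simp
    qed
    have "norm (T m) = exp (- (2 * pi * y * s))"
      unfolding T_def n_def[symmetric] s_def[symmetric] by (simp add: norm_mult norm_power norm_exp_eq_Re y_def)
    also have "\<dots> \<le> exp (- (2 * pi * y * n))" using sn y0 by simp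
    also have "exp (- (2 * pi * y * n)) = r ^ Suc m"
    proof -
      have "exp (- (2 * pi * y * n)) = exp (real (Suc m) * (- (2 * pi * y)))" unfolding n_def by (simp add: algebra_simps)
      also have "\<dots> = r ^ Suc m" unfolding r_def by (rule exp_of_nat_mult)
      finally show ?thesis .
    qed
    finally show "norm (T m) \<le> r * r^m" by simp
  qed
  have gs: "(\<lambda>m. r * r^m) sums (r / (1 - r))"
    using sums_mult[OF geometric_sums[of r], of r] r0 r1 by (simp add: field_simps)
  have ns: "summable (\<lambda>m. norm (T m))"
    by (rule summable_comparison_test'[OF sums_summable[OF gs], of 0]) (use Tb in simp)
  have "norm (f0 a b \<tau>) \<le> (\<Sum>m. norm (T m))" unfolding f0eq by (rule summable_norm[OF ns])
  also have "\<dots> \<le> (\<Sum>m. r * r^m)" by (rule suminf_le[OF Tb ns sums_summable[OF gs]])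
  also have "\<dots> = r / (1 - r)" using gs by (simp add: sums_iff)
  also have "\<dots> \<le> 1 / (2 * pi * y)" unfolding r_def using exp_frac_le[of "2 * pi * y"] y0 by simp
  finally show ?thesis by (simp add: y_def)
qed

lemma Phi_bound:
  assumes y: "0 < y" and yx: "y \<le> \<bar>x\<bar>" and x2: "\<bar>x\<bar> \<le> 1/2"
  shows "(\<Sum>n. beta n * Re (nome (Complex x y) ^ n / (1 - nome (Complex x y) ^ n))) \<le> pi / (16 * y) + 50"
proof (cases "1/100 \<le> y")
  case True then show ?thesis using Phi_case1[OF y] by blast
next
  case False
  then have y1: "y < 1/100" by simp
  show ?thesis
  proof (cases "\<bar>x\<bar> \<le> 5 * y")
    case True then show ?thesis using Phi_case2[OF y yx y1] by blast
  next
    case False then show ?thesis using Phi_case3[OF y y1 _ x2] by simp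
  qed
qed

theorem proposition2p3:
  fixes k :: nat
  assumes "k \<ge> 1"
  shows "\<exists>C. \<forall>N::real. \<forall>x::real. \<forall>y::real.
           N > 0 \<longrightarrow> y = 1 / (4 * sqrt N) \<longrightarrow> y \<le> \<bar>x\<bar> \<longrightarrow> \<bar>x\<bar> \<le> 1/2 \<longrightarrow>
           norm (F k (Complex x y)) \<le> C * sqrt N * exp (pi / 4 * sqrt N)"
proof (intro exI allI impI)
  fix N x y :: real
  assume N: "N > 0" and yN: "y = 1 / (4 * sqrt N)" and yx: "y \<le> \<bar>x\<bar>" and x2: "\<bar>x\<bar> \<le> 1/2"
  define \<tau> where "\<tau> = Complex x y"
  have sN: "sqrt N > 0" using N by simp
  have y: "y > 0" using yN sN by simp
  have Im: "Im \<tau> = y" unfolding \<tau>_def by simp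
  have yI: "Im \<tau> > 0" using Im y by simp
  have q1: "norm (nome \<tau>) < 1" by (rule nome_norm_lt1[OF yI])
  define B where "B = 2 * f0 2 (4 * int k - 2) \<tau> - f0 1 (4 * int k - 1) \<tau> - f0 1 (4 * int k - 3) \<tau>"
  have Fe: "F k \<tau> = qpoch_inf (- nome \<tau>) (nome \<tau>) / qpoch_inf (nome \<tau>) (nome \<tau>) * B"
    unfolding F_def B_def ..
  have nB: "norm B \<le> 2 / (pi * y)"
  proof -
    have b1: "norm (f0 2 (4 * int k - 2) \<tau>) \<le> 1 / (2 * pi * y)"
      using f0_bound[OF yI, of 2 "4 * int k - 2"] assms Im by simp
    have b2: "norm (f0 1 (4 * int k - 1) \<tau>) \<le> 1 / (2 * pi * y)"
      using f0_bound[OF yI, of 1 "4 * int k - 1"] assms Im by simp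
    have b3: "norm (f0 1 (4 * int k - 3) \<tau>) \<le> 1 / (2 * pi * y)"
      using f0_bound[OF yI, of 1 "4 * int k - 3"] assms Im by simp
    have "norm B \<le> 2 * norm (f0 2 (4 * int k - 2) \<tau>) + norm (f0 1 (4 * int k - 1) \<tau>) + norm (f0 1 (4 * int k - 3) \<tau>)"
    proof -
      define A1 where "A1 = f0 2 (4 * int k - 2) \<tau>"
      define A2 where "A2 = f0 1 (4 * int k - 1) \<tau>"
      define A3 where "A3 = f0 1 (4 * int k - 3) \<tau>"
      have i1: "norm (2 * A1 - A2 - A3) \<le> norm (2 * A1 - A2) + norm A3" by (rule norm_triangle_ineq4)
      have i2: "norm (2 * A1 - A2) \<le> norm (2 * A1) + norm A2" by (rule norm_triangle_ineq4)
      have i3: "norm (2 * A1) = 2 * norm A1" by (simp add: norm_mult)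
      show ?thesis unfolding B_def A1_def[symmetric] A2_def[symmetric] A3_def[symmetric]
        using i1 i2 i3 by linarith
    qed
    also have "\<dots> \<le> 4 * (1 / (2 * pi * y))" using b1 b2 b3 by simp
    also have "\<dots> = 2 / (pi * y)" by simp
    finally show ?thesis .
  qed
  have nP: "norm (qpoch_inf (- nome \<tau>) (nome \<tau>) / qpoch_inf (nome \<tau>) (nome \<tau>)) \<le> exp (pi / (16 * y) + 50)"
  proof -
    have "norm (qpoch_inf (- nome \<tau>) (nome \<tau>) / qpoch_inf (nome \<tau>) (nome \<tau>))
          = exp (\<Sum>n. beta n * Re (nome \<tau> ^ n / (1 - nome \<tau> ^ n)))" by (rule norm_ratio[OF q1])
    also have "\<dots> \<le> exp (pi / (16 * y) + 50)" using Phi_bound[OF y yx x2] unfolding \<tau>_def by simp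
    finally show ?thesis .
  qed
  have "norm (F k (Complex x y)) = norm (qpoch_inf (- nome \<tau>) (nome \<tau>) / qpoch_inf (nome \<tau>) (nome \<tau>)) * norm B"
    unfolding \<tau>_def[symmetric] Fe by (rule norm_mult)
  also have "\<dots> \<le> exp (pi / (16 * y) + 50) * (2 / (pi * y))"
    using nP nB by (intro mult_mono) auto
  also have "pi / (16 * y) = pi / 4 * sqrt N" using sN unfolding yN by (simp add: field_simps)
  also have "2 / (pi * y) = 8 / pi * sqrt N" using sN unfolding yN by (simp add: field_simps)
  also have "exp (pi / 4 * sqrt N + 50) * (8 / pi * sqrt N) = (8 * exp 50 / pi) * sqrt N * exp (pi / 4 * sqrt N)"
    unfolding exp_add by (simp add: field_simps)
  finally show "norm (F k (Complex x y)) \<le> (8 * exp 50 / pi) * sqrt N * exp (pi / 4 * sqrt N)" .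
qed


end
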